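(* Let $k$ be an even positive integer. Then each connected component of $\mathcal F_k$ is a tree in which every vertex has infinitely many neighbors.
   Context: The vertex set $V$ consists of all reduced fractions $p/q$ with $p,q\in\mathbb Z$, $\gcd(p,q)=1$, together with $1/0$; here $p/q$ and $(-p)/(-q)$ denote the same vertex. For vertices define $d(p/q,a/b)=|pb-qa|$. The graph $\mathcal F_k$ has vertex set $V$, with an edge between $p/q$ and $a/b$ exactly when $d(p/q,a/b)=k$. *)

theory Defs
  imports Main
begin

text \<open>Vertices: reduced fractions p/q, represented by the normalized integer pair (p,q)
  with gcd(p,q)=1 and either q > 0, or q = 0 and p = 1 (the vertex 1/0).
  Each class {(p,q),(-p,-q)} has exactly one such representative.\<close>
definition Vert :: "(int \<times> int) set" where
  "Vert = {(p, q). coprime p q \<and> (q > 0 \<or> (q = 0 \<and> p = 1))}"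

definition fdist :: "int \<times> int \<Rightarrow> int \<times> int \<Rightarrow> int" where
  "fdist x y = \<bar>fst x * snd y - snd x * fst y\<bar>"

definition Fadj :: "int \<Rightarrow> int \<times> int \<Rightarrow> int \<times> int \<Rightarrow> bool" where
  "Fadj k x y \<longleftrightarrow> x \<in> Vert \<and> y \<in> Vert \<and> fdist x y = k"

definition component :: "('a \<Rightarrow> 'a \<Rightarrow> bool) \<Rightarrow> 'a \<Rightarrow> 'a set" where
  "component E v = {w. E\<^sup>*\<^sup>* v w}"

definition has_cycle_in :: "('a \<Rightarrow> 'a \<Rightarrow> bool) \<Rightarrow> 'a set \<Rightarrow> bool" where
  "has_cycle_in E S \<longleftrightarrow> (\<exists>cs. length cs \<ge> 3 \<and> distinct cs \<and> set cs \<subseteq> S \<and>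
      (\<forall>i < length cs. E (cs ! i) (cs ! ((i + 1) mod length cs))))"

definition is_tree :: "('a \<Rightarrow> 'a \<Rightarrow> bool) \<Rightarrow> 'a set \<Rightarrow> bool" where
  "is_tree E S \<longleftrightarrow> S \<noteq> {} \<and>
     (\<forall>x\<in>S. \<forall>y\<in>S. (\<lambda>a b. a \<in> S \<and> b \<in> S \<and> E a b)\<^sup>*\<^sup>* x y) \<and>
     \<not> has_cycle_in E S"

end

theory Submission
  imports Defs "HOL-Library.Product_Lexorder"
begin

definition key :: "int \<times> int \<Rightarrow> int \<times> int \<times> int" where
  "key y = (snd y, \<bar>fst y\<bar>, fst y)"

lemma key_inj: "key x = key y \<Longrightarrow> x = y"
  by (cases x; cases y) (auto simp: key_def)

lemma key_less: "key (a, b) < key (p, q) \<Longrightarrow> b \<le> q \<and> (b = q \<longrightarrow> \<bar>a\<bar> \<le> \<bar>p\<bar>)"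
  by (auto simp: key_def less_prod_def)

lemma fdist_sym: "fdist x y = fdist y x"
  by (simp add: fdist_def abs_minus_commute mult.commute)

lemma Fadj_sym: "Fadj k x y \<Longrightarrow> Fadj k y x"
  by (auto simp: Fadj_def fdist_sym)

lemma not_both_even: "coprime (p::int) q \<Longrightarrow> \<not> (even p \<and> even q)"
  using coprime_common_divisor_int[of p q 2] by auto

lemma parity:
  fixes p q c d :: int
  assumes "coprime p q" "coprime c d" "even (p * d - q * c)"
  shows "even (c - p) \<and> even (d - q)"
  using not_both_even[OF assms(1)] not_both_even[OF assms(2)] assms(3)
  by (cases "even p"; cases "even q"; cases "even c"; cases "even d") auto

lemma signed_rep:
  fixes p q a b k :: int
  assumes "(a, b) \<in> Vert" "\<bar>p * b - q * a\<bar> = k"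
  obtains c d where "p * d - q * c = k" "coprime c d"
    "(c = a \<and> d = b) \<or> (c = - a \<and> d = - b)"
proof (cases "p * b - q * a = k")
  case True
  then show ?thesis using that assms by (auto simp: Vert_def)
next
  case False
  then have "p * (-b) - q * (-a) = k" using assms(2) by (auto simp: abs_if)
  moreover have "coprime (-a) (-b)" using assms(1) by (auto simp: Vert_def)
  ultimately show ?thesis using that[where c="-a" and d="-b"] by auto
qed

lemma unique_smaller:
  fixes k :: int
  assumes k: "k > 0" "even k" and x: "x \<in> Vert"
    and a1: "Fadj k x y1" and a2: "Fadj k x y2"
    and s1: "key y1 < key x" and s2: "key y2 < key x"
  shows "y1 = y2"
proof (rule ccontr)
  assume ne: "y1 \<noteq> y2"
  obtain p q where xpq: "x = (p, q)" by (cases x)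
  obtain a1 b1 where y1: "y1 = (a1, b1)" by (cases y1)
  obtain a2 b2 where y2: "y2 = (a2, b2)" by (cases y2)
  have cpq: "coprime p q" and xv: "q > 0 \<or> (q = 0 \<and> p = 1)" using x xpq by (auto simp: Vert_def)
  have v1: "(a1, b1) \<in> Vert" and v2: "(a2, b2) \<in> Vert" using a1 a2 y1 y2 by (auto simp: Fadj_def)
  have b1: "b1 \<ge> 0" and b2: "b2 \<ge> 0" using v1 v2 by (auto simp: Vert_def)
  have f1: "\<bar>p * b1 - q * a1\<bar> = k" and f2: "\<bar>p * b2 - q * a2\<bar> = k"
    using a1 a2 xpq y1 y2 by (auto simp: Fadj_def fdist_def)
  have k1: "b1 \<le> q \<and> (b1 = q \<longrightarrow> \<bar>a1\<bar> \<le> \<bar>p\<bar>)" using key_less s1 xpq y1 by auto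
  have k2: "b2 \<le> q \<and> (b2 = q \<longrightarrow> \<bar>a2\<bar> \<le> \<bar>p\<bar>)" using key_less s2 xpq y2 by auto
  have qpos: "q > 0"
  proof (rule ccontr)
    assume "\<not> q > 0"
    then have "q = 0" "p = 1" using xv by auto
    then have "b1 = 0" using k1 b1 by auto
    then show False using f1 k \<open>q = 0\<close> by auto
  qed
  obtain c1 d1 where e1: "p * d1 - q * c1 = k" "coprime c1 d1"
    "(c1 = a1 \<and> d1 = b1) \<or> (c1 = - a1 \<and> d1 = - b1)"
    using signed_rep[OF v1 f1] by blast
  obtain c2 d2 where e2: "p * d2 - q * c2 = k" "coprime c2 d2"
    "(c2 = a2 \<and> d2 = b2) \<or> (c2 = - a2 \<and> d2 = - b2)"
    using signed_rep[OF v2 f2] by blast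
  have par1: "even (c1 - p) \<and> even (d1 - q)" using parity[OF cpq e1(2)] e1(1) k by auto
  have par2: "even (c2 - p) \<and> even (d2 - q)" using parity[OF cpq e2(2)] e2(1) k by auto
  obtain u v where uv: "u * p + v * q = 1" using bezout_int[of p q] cpq by auto
  have rel: "q * (c1 - c2) = p * (d1 - d2)" using e1(1) e2(1) by (simp add: algebra_simps)
  define t where "t = u * (c1 - c2) + v * (d1 - d2)"
  have tc: "c1 - c2 = t * p"
  proof -
    have "t * p = u * p * (c1 - c2) + v * (p * (d1 - d2))" by (simp add: t_def algebra_simps)
    also have "\<dots> = u * p * (c1 - c2) + v * (q * (c1 - c2))" using rel by simp
    also have "\<dots> = (u * p + v * q) * (c1 - c2)" by (simp add: algebra_simps)
    finally show ?thesis using uv by simp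
  qed
  have td: "d1 - d2 = t * q"
  proof -
    have "t * q = u * (q * (c1 - c2)) + v * q * (d1 - d2)" by (simp add: t_def algebra_simps)
    also have "\<dots> = u * (p * (d1 - d2)) + v * q * (d1 - d2)" using rel by simp
    also have "\<dots> = (u * p + v * q) * (d1 - d2)" by (simp add: algebra_simps)
    finally show ?thesis using uv by simp
  qed
  have teven: "even t"
  proof (rule ccontr)
    assume "odd t"
    have "even (t * p)" "even (t * q)" using par1 par2 tc td
        even_diff[of "c1-p" "c2-p"] even_diff[of "d1-q" "d2-q"] by auto
    then show False using \<open>odd t\<close> not_both_even[OF cpq] by auto
  qed
  have tnz: "t \<noteq> 0"
  proof
    assume "t = 0"
    then have "c1 = c2" "d1 = d2" using tc td by auto
    then have "y1 = y2" using e1(3) e2(3) y1 y2 v1 v2 b1 b2 by (auto simp: Vert_def)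
    then show False using ne by simp
  qed
  have t2: "t \<ge> 2 \<or> t \<le> -2" using teven tnz by presburger
  have dq1: "-q \<le> d1 \<and> d1 \<le> q" using e1(3) b1 k1 by auto
  have dq2: "-q \<le> d2 \<and> d2 \<le> q" using e2(3) b2 k2 by auto
  have xy: "x \<noteq> y1" "x \<noteq> y2" using a1 a2 k by (auto simp: Fadj_def fdist_def)
  show False using t2
  proof
    assume "t \<ge> 2"
    then have "t * q \<ge> 2 * q" using qpos by (simp add: mult_right_mono)
    then have "d1 = q" "d2 = -q" "t * q = 2 * q" using dq1 dq2 td by linarith+
    then have "t = 2" using qpos by simp
    have "a1 = c1" "b1 = q" using e1(3) \<open>d1 = q\<close> qpos b1 by auto
    moreover have "a2 = - c2" "b2 = q" using e2(3) \<open>d2 = -q\<close> qpos b2 by auto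
    ultimately have "a1 + a2 = 2 * p" "\<bar>a1\<bar> \<le> \<bar>p\<bar>" "\<bar>a2\<bar> \<le> \<bar>p\<bar>"
      using tc \<open>t = 2\<close> k1 k2 by auto
    then have "a1 = p" by (auto simp: abs_if split: if_splits)
    then show False using xy \<open>b1 = q\<close> xpq y1 by auto
  next
    assume "t \<le> -2"
    then have "t * q \<le> -2 * q" using qpos mult_right_mono[of t "-2" q] by simp
    then have "d1 = -q" "d2 = q" "t * q = -2 * q" using dq1 dq2 td by linarith+
    then have "(t + 2) * q = 0" by (simp add: algebra_simps)
    then have "t = -2" using qpos by simp
    have "a1 = -c1" "b1 = q" using e1(3) \<open>d1 = -q\<close> qpos b1 by auto
    moreover have "a2 = c2" "b2 = q" using e2(3) \<open>d2 = q\<close> qpos b2 by auto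
    ultimately have "a1 + a2 = 2 * p" "\<bar>a1\<bar> \<le> \<bar>p\<bar>" "\<bar>a2\<bar> \<le> \<bar>p\<bar>"
      using tc \<open>t = -2\<close> k1 k2 by auto
    then have "a1 = p" by (auto simp: abs_if split: if_splits)
    then show False using xy \<open>b1 = q\<close> xpq y1 by auto
  qed
qed


lemma comp_vert:
  assumes "(Fadj k)\<^sup>*\<^sup>* v w" "v \<in> Vert" shows "w \<in> Vert"
  using assms by (induction rule: rtranclp_induct) (auto simp: Fadj_def)

lemma infinite_nbrs:
  fixes k :: int
  assumes k: "k > 0" and w: "w \<in> Vert"
  shows "infinite {u. Fadj k w u}"
proof -
  obtain p q where wpq: "w = (p, q)" by (cases w)
  have cpq: "coprime p q" and wv: "q > 0 \<or> (q = 0 \<and> p = 1)" using w wpq by (auto simp: Vert_def)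
  obtain u v where uv: "u * p + v * q = 1" using bezout_int[of p q] cpq by auto
  define g where "g n = (p + k * (- v + (\<bar>u\<bar> + int n) * p), q + k * (u + (\<bar>u\<bar> + int n) * q))" for n
  have nb: "Fadj k w (g n)" for n
  proof -
    define s where "s = \<bar>u\<bar> + int n"
    define a where "a = p + k * (- v + s * p)"
    define b where "b = q + k * (u + s * q)"
    have g: "g n = (a, b)" by (simp add: g_def a_def b_def s_def)
    have det: "p * b - q * a = k"
    proof -
      have "p * b - q * a = k * (u * p + v * q)" by (simp add: a_def b_def algebra_simps)
      then show ?thesis using uv by simp
    qed
    have "coprime a b"
    proof (rule coprimeI)
      fix c assume ca: "c dvd a" and cb: "c dvd b"
      have "c dvd p * b - q * a" using ca cb by simp
      then have ck: "c dvd k" using det by simp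
      have "p = a - k * (- v + s * p)" by (simp add: a_def)
      then have "c dvd p" using ca ck by (metis dvd_diff dvd_mult2)
      moreover have "q = b - k * (u + s * q)" by (simp add: b_def)
      then have "c dvd q" using cb ck by (metis dvd_diff dvd_mult2)
      ultimately show "is_unit c" using cpq coprime_common_divisor by blast
    qed
    moreover have "b > 0"
    proof (cases "q > 0")
      case True
      have s0: "s \<ge> 0" "s \<ge> - u" by (auto simp: s_def)
      have "s * q \<ge> s * 1" using True s0 by (intro mult_left_mono) auto
      then have "u + s * q \<ge> 0" using s0 by simp
      then have "k * (u + s * q) \<ge> 0" using k by simp
      then show ?thesis using True by (simp add: b_def)
    next
      case False
      then have "q = 0" "p = 1" using wv by auto
      then have "u = 1" using uv by simp
      then show ?thesis using k \<open>q = 0\<close> by (simp add: b_def)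
    qed
    ultimately have "(a, b) \<in> Vert" by (simp add: Vert_def)
    then show ?thesis using w g det k wpq by (simp add: Fadj_def fdist_def)
  qed
  have "inj g"
  proof
    fix m n assume "g m = g n"
    then have "k * (int m * p) = k * (int n * p)" "k * (int m * q) = k * (int n * q)"
      by (auto simp: g_def algebra_simps)
    then have "int m * p = int n * p" "int m * q = int n * q" using k by auto
    moreover have "p \<noteq> 0 \<or> q \<noteq> 0" using wv by auto
    ultimately show "m = n" by auto
  qed
  moreover have "range g \<subseteq> {u. Fadj k w u}" using nb by auto
  ultimately show ?thesis
  proof -
    assume ig: "inj g" and rg: "range g \<subseteq> {u. Fadj k w u}"
    show ?thesis
    proof
      assume "finite {u. Fadj k w u}"
      then have "finite (range g)" using rg finite_subset by blast
      then have "finite (UNIV :: nat set)" using finite_imageD ig by blast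
      then show False by simp
    qed
  qed
qed

lemma rtranclp_sym_conv:
  assumes "\<And>a b. R a b \<Longrightarrow> R b a" "R\<^sup>*\<^sup>* x y" shows "R\<^sup>*\<^sup>* y x"
  using assms(2)
proof (induction rule: rtranclp_induct)
  case base then show ?case by simp
next
  case (step y z)
  then show ?case using assms(1) by (meson converse_rtranclp_into_rtranclp)
qed

lemma comp_restrict:
  assumes "E\<^sup>*\<^sup>* v w"
  shows "(\<lambda>a b. a \<in> component E v \<and> b \<in> component E v \<and> E a b)\<^sup>*\<^sup>* v w"
  using assms
proof (induction rule: rtranclp_induct)
  case base then show ?case by simp
next
  case (step y z)
  have "y \<in> component E v" "z \<in> component E v"
    using step.hyps by (auto simp: component_def)
  then show ?case using step.IH step.hyps(2)
    by (simp add: rtranclp.rtrancl_into_rtrancl)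
qed

lemma no_cycle:
  fixes k :: int
  assumes k: "k > 0" "even k" and S: "S \<subseteq> Vert"
  shows "\<not> has_cycle_in (Fadj k) S"
proof
  assume "has_cycle_in (Fadj k) S"
  then obtain cs where len: "length cs \<ge> 3" and dist: "distinct cs" and sub: "set cs \<subseteq> S"
    and adj: "\<forall>i < length cs. Fadj k (cs ! i) (cs ! ((i + 1) mod length cs))"
    by (auto simp: has_cycle_in_def)
  define n where "n = length cs"
  have fin: "finite (key ` set cs)" and nemp: "key ` set cs \<noteq> {}" using len by auto
  obtain i where i: "i < n" "key (cs ! i) = Max (key ` set cs)"
    using Max_in[OF fin nemp] by (auto simp: n_def in_set_conv_nth)
  define j where "j = (i + 1) mod n"
  define h where "h = (if i = 0 then n - 1 else i - 1)"
  have n3: "n \<ge> 3" using len by (simp add: n_def)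
  have hj: "j < n" "h < n" "(h + 1) mod n = i" "j \<noteq> i" "h \<noteq> i" "j \<noteq> h"
  proof -
    have jj: "j = (if i + 1 = n then 0 else i + 1)" using i(1) by (simp add: j_def)
    show "j < n" "h < n" "j \<noteq> i" "h \<noteq> i" "j \<noteq> h" using i(1) n3 jj h_def by auto
    show "(h + 1) mod n = i" using i(1) n3 h_def by auto
  qed
  have A1: "Fadj k (cs ! i) (cs ! j)" using adj i(1) by (simp add: j_def n_def)
  have A2: "Fadj k (cs ! i) (cs ! h)" using adj hj(2,3) Fadj_sym by (metis n_def)
  have smaller: "key (cs ! m) < key (cs ! i)" if "m < n" "m \<noteq> i" for m
  proof -
    have "cs ! m \<noteq> cs ! i" using dist that i(1) by (simp add: n_def nth_eq_iff_index_eq)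
    then have "key (cs ! m) \<noteq> key (cs ! i)" using key_inj by blast
    moreover have "key (cs ! m) \<le> key (cs ! i)" using i(2) fin that by (simp add: n_def)
    ultimately show ?thesis by simp
  qed
  have "cs ! i \<in> set cs" using i(1) by (simp add: n_def)
  then have "cs ! i \<in> Vert" using sub S by blast
  then have "cs ! j = cs ! h"
    using unique_smaller[OF k _ A1 A2 smaller smaller] hj by auto
  then show False using dist hj by (simp add: n_def nth_eq_iff_index_eq)
qed

theorem proposition4p13:
  fixes k :: int
  assumes "k > 0" and "even k"
  shows "\<forall>v\<in>Vert. is_tree (Fadj k) (component (Fadj k) v) \<and>
           (\<forall>w\<in>component (Fadj k) v. infinite {u. Fadj k w u})"
proof (rule ballI, rule conjI)
  fix v assume v: "v \<in> Vert"
  let ?S = "component (Fadj k) v"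
  have SV: "?S \<subseteq> Vert"
  proof
    fix w assume "w \<in> ?S" then show "w \<in> Vert" using comp_vert v unfolding component_def by blast
  qed
  show "\<forall>w\<in>?S. infinite {u. Fadj k w u}" using SV infinite_nbrs assms(1) by blast
  let ?R = "\<lambda>a b. a \<in> ?S \<and> b \<in> ?S \<and> Fadj k a b"
  have conn: "?R\<^sup>*\<^sup>* x y" if "x \<in> ?S" "y \<in> ?S" for x y
  proof -
    have "?R\<^sup>*\<^sup>* v x" "?R\<^sup>*\<^sup>* v y" using that comp_restrict by (auto simp: component_def)
    then have "?R\<^sup>*\<^sup>* x v" using rtranclp_sym_conv[of ?R] Fadj_sym by blast
    then show ?thesis using \<open>?R\<^sup>*\<^sup>* v y\<close> by (rule rtranclp_trans)
  qed
  have "v \<in> ?S" by (simp add: component_def)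
  then show "is_tree (Fadj k) ?S"
    unfolding is_tree_def using conn no_cycle[OF assms SV] by blast
qed

end
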